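(* GDD message passing always converges: for any input, the sequence of dual objective values $g(\boldsymbol\lambda^{(k)})$, $k=1,2,\dots$, computed after each sweep of GDD converges (to a finite limit).
   Context: Let $\mathcal{V}=\{1,\dots,n\}$; each variable $x_i$ takes values in a finite set, $\mathbf{x}_s=(x_i)_{i\in s}$ for $s\subseteq\mathcal{V}$. Let $\mathcal{C}$ be a collection of subsets of $\mathcal{V}$ with real potentials $\theta_c(\mathbf{x}_c)$. Let $\mathcal{C}'$ be a finite collection of subsets of $\mathcal{V}$ and for each $c\in\mathcal{C}'$ let $\mathcal{S}(c)$ be a collection of subsets of $c$ (possibly containing $c$), with $\mathcal{S}(c)\setminus\{c\}\neq\emptyset$ and $\mathcal{C}'\cup\bigcup_{c}\mathcal{S}(c)\supseteq\mathcal{C}$; put $\mathcal{T}=\mathcal{C}'\cup\bigcup_{c\in\mathcal{C}'}\mathcal{S}(c)$. Messages are reals $\lambda_{c\to s}(\mathbf{x}_s)$, $c\in\mathcal{C}'$, $s\in\mathcal{S}(c)\setminus\{c\}$. For $t\in\mathcal{T}$: $\hat\theta_t=\mathbb{1}(t\in\mathcal{C})\theta_t$; $\gamma_t(\mathbf{x}_t)=\mathbb{1}(t\in\mathcal{C}')\sum_{\hat s\in\mathcal{S}(t)\setminus\{t\}}\lambda_{t\to\hat s}(\mathbf{x}_{\hat s})$; $\lambda_t(\mathbf{x}_t)=\sum_{c'\in\mathcal{C}':\,t\in\mathcal{S}(c')\setminus\{c'\}}\lambda_{c'\to t}(\mathbf{x}_t)$; beliefs $b_t=\hat\theta_t+\lambda_t-\gamma_t$;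 dual objective $g(\boldsymbol\lambda)=\sum_{t\in\mathcal{T}}\max_{\mathbf{x}_t}b_t(\mathbf{x}_t)$. For $c\in\mathcal{C}'$, $s\in\mathcal{S}(c)\setminus\{c\}$, $\lambda_s^{-c}(\mathbf{x}_s)=\sum_{\hat c\in\mathcal{C}':\,\hat c\ne c,\ s\in\mathcal{S}(\hat c)\setminus\{\hat c\}}\lambda_{\hat c\to s}(\mathbf{x}_s)$. GDD message passing: start with all messages equal to $0$; in each sweep, go through the clusters $c\in\mathcal{C}'$ one at a time and replace, for all $s\in\mathcal{S}(c)\setminus\{c\}$ and $\mathbf{x}_s$ simultaneously, $\lambda_{c\to s}(\mathbf{x}_s)$ by $\lambda^*_{c\to s}(\mathbf{x}_s)=-\hat\theta_s(\mathbf{x}_s)+\gamma_s(\mathbf{x}_s)-\lambda_s^{-c}(\mathbf{x}_s)+\frac{1}{|\mathcal{S}(c)\setminus\{c\}|}\max_{\mathbf{x}_{c\setminus s}}[\hat\theta_c(\mathbf{x}_c)+\lambda_c(\mathbf{x}_c)+\sum_{\hat s\in\mathcal{S}(c)\setminus\{c\}}(\hat\theta_{\hat s}-\gamma_{\hat s}+\lambda^{-c}_{\hat s})(\mathbf{x}_{\hat s})]$ (all quantities evaluated at the current messages); after each sweep $k$ record $g(\boldsymbol\lambda^{(k)})$. *)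

theory Defs
  imports "HOL-Library.FuncSet" Complex_Main
begin

text \<open>Assignments x_s to a variable set s are the extensional functions in PiE s D
(value undefined outside s). Messages lam c s x_s, potentials th t x_t.
Parameters: D (domains), C, th, C' (Cp), S.\<close>

definition maxover :: "('v \<Rightarrow> 'a set) \<Rightarrow> 'v set \<Rightarrow> (('v \<Rightarrow> 'a) \<Rightarrow> real) \<Rightarrow> real" where
  "maxover D t f = Max (f ` PiE t D)"

definition Tset :: "'v set set \<Rightarrow> ('v set \<Rightarrow> 'v set set) \<Rightarrow> 'v set set" where
  "Tset Cp S = Cp \<union> (\<Union>c\<in>Cp. S c)"

definition theta_hat :: "'v set set \<Rightarrow> ('v set \<Rightarrow> ('v \<Rightarrow> 'a) \<Rightarrow> real) \<Rightarrow> 'v set \<Rightarrow> ('v \<Rightarrow> 'a) \<Rightarrow> real" where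
  "theta_hat C th t x = (if t \<in> C then th t x else 0)"

definition gamma :: "'v set set \<Rightarrow> ('v set \<Rightarrow> 'v set set)
    \<Rightarrow> ('v set \<Rightarrow> 'v set \<Rightarrow> ('v \<Rightarrow> 'a) \<Rightarrow> real) \<Rightarrow> 'v set \<Rightarrow> ('v \<Rightarrow> 'a) \<Rightarrow> real" where
  "gamma Cp S lam t x = (if t \<in> Cp then (\<Sum>s\<in>S t - {t}. lam t s (restrict x s)) else 0)"

definition lam_in :: "'v set set \<Rightarrow> ('v set \<Rightarrow> 'v set set)
    \<Rightarrow> ('v set \<Rightarrow> 'v set \<Rightarrow> ('v \<Rightarrow> 'a) \<Rightarrow> real) \<Rightarrow> 'v set \<Rightarrow> ('v \<Rightarrow> 'a) \<Rightarrow> real" where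
  "lam_in Cp S lam t x = (\<Sum>c'\<in>{c'\<in>Cp. t \<in> S c' - {c'}}. lam c' t x)"

definition lam_minus :: "'v set set \<Rightarrow> ('v set \<Rightarrow> 'v set set)
    \<Rightarrow> ('v set \<Rightarrow> 'v set \<Rightarrow> ('v \<Rightarrow> 'a) \<Rightarrow> real) \<Rightarrow> 'v set \<Rightarrow> 'v set \<Rightarrow> ('v \<Rightarrow> 'a) \<Rightarrow> real" where
  "lam_minus Cp S lam c s x = (\<Sum>c'\<in>{c'\<in>Cp. c' \<noteq> c \<and> s \<in> S c' - {c'}}. lam c' s x)"

definition belief where
  "belief C th Cp S lam t x = theta_hat C th t x + lam_in Cp S lam t x - gamma Cp S lam t x"

definition dual_obj where
  "dual_obj D C th Cp S lam = (\<Sum>t\<in>Tset Cp S. maxover D t (belief C th Cp S lam t))"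

definition lam_star where
  "lam_star D C th Cp S lam c s xs =
     - theta_hat C th s xs + gamma Cp S lam s xs - lam_minus Cp S lam c s xs
     + (1 / real (card (S c - {c}))) *
       Max ((\<lambda>xc. theta_hat C th c xc + lam_in Cp S lam c xc
               + (\<Sum>s'\<in>S c - {c}. theta_hat C th s' (restrict xc s')
                                   - gamma Cp S lam s' (restrict xc s')
                                   + lam_minus Cp S lam c s' (restrict xc s')))
            ` {xc \<in> PiE c D. restrict xc s = xs})"

definition gdd_update where
  "gdd_update D C th Cp S c lam =
     (\<lambda>c' s xs. if c' = c \<and> s \<in> S c - {c} then lam_star D C th Cp S lam c s xs else lam c' s xs)"

definition gdd_sweep where
  "gdd_sweep D C th Cp S cs lam = fold (gdd_update D C th Cp S) cs lam"

definition gdd_iter where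
  "gdd_iter D C th Cp S cs k = (gdd_sweep D C th Cp S cs ^^ k) (\<lambda>_ _ _. 0)"

end

theory Submission
  imports Defs
begin

locale gdd =
  fixes V :: "'v set" and D :: "'v \<Rightarrow> 'a set"
    and C :: "'v set set" and th :: "'v set \<Rightarrow> ('v \<Rightarrow> 'a) \<Rightarrow> real"
    and Cp :: "'v set set" and S :: "'v set \<Rightarrow> 'v set set"
  assumes finV: "finite V"
    and Dne: "\<And>i. i \<in> V \<Longrightarrow> finite (D i) \<and> D i \<noteq> {}"
    and finCp: "finite Cp" and CpV: "Cp \<subseteq> Pow V"
    and Sc: "\<And>c. c \<in> Cp \<Longrightarrow> S c \<subseteq> Pow c \<and> S c - {c} \<noteq> {}"
begin

lemma PiE_fin_ne: assumes "t \<subseteq> V" shows "finite (PiE t D)" "PiE t D \<noteq> {}"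
proof -
  have ft: "finite t" using assms finV finite_subset by blast
  show "finite (PiE t D)" using ft assms Dne by (intro finite_PiE) auto
  show "PiE t D \<noteq> {}" using assms Dne by (auto simp: PiE_eq_empty_iff)
qed

lemma maxover_ge: assumes "t \<subseteq> V" "x \<in> PiE t D" shows "f x \<le> maxover D t f"
  unfolding maxover_def using PiE_fin_ne[OF assms(1)] assms(2) by (intro Max_ge) auto

lemma maxover_le: assumes "t \<subseteq> V" "\<And>x. x \<in> PiE t D \<Longrightarrow> f x \<le> B" shows "maxover D t f \<le> B"
  unfolding maxover_def using PiE_fin_ne[OF assms(1)] assms(2) by (subst Max_le_iff) auto

lemma T_sub: "Tset Cp S \<subseteq> Pow V"
  unfolding Tset_def using CpV Sc by blast

lemma T_fin: "finite (Tset Cp S)"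
  using T_sub finV by (meson finite_Pow_iff finite_subset)

lemma lower: assumes x0: "x0 \<in> PiE V D"
  shows "(\<Sum>t\<in>Tset Cp S. theta_hat C th t (restrict x0 t)) \<le> dual_obj D C th Cp S lam"
proof -
  let ?T = "Tset Cp S"
  have r: "restrict x0 t \<in> PiE t D" if "t \<subseteq> V" for t
    using x0 that by (auto simp: PiE_iff)
  have "(\<Sum>t\<in>?T. belief C th Cp S lam t (restrict x0 t)) \<le> dual_obj D C th Cp S lam"
    unfolding dual_obj_def
  proof (intro sum_mono maxover_ge)
    fix t assume "t \<in> ?T"
    then have tV: "t \<subseteq> V" using T_sub by blast
    show "t \<subseteq> V" by (fact tV)
    show "restrict x0 t \<in> PiE t D" by (rule r[OF tV])
  qed
  moreover have "(\<Sum>t\<in>?T. lam_in Cp S lam t (restrict x0 t)) = (\<Sum>t\<in>?T. gamma Cp S lam t (restrict x0 t))"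
  proof -
    have "(\<Sum>t\<in>?T. lam_in Cp S lam t (restrict x0 t))
        = (\<Sum>t\<in>?T. \<Sum>c'\<in>{c'\<in>Cp. t \<in> S c' - {c'}}. lam c' t (restrict x0 t))"
      by (simp add: lam_in_def)
    also have "\<dots> = (\<Sum>c'\<in>Cp. \<Sum>t\<in>{t\<in>?T. t \<in> S c' - {c'}}. lam c' t (restrict x0 t))"
      by (rule sum.swap_restrict[OF T_fin finCp])
    also have "\<dots> = (\<Sum>c'\<in>Cp. \<Sum>t\<in>S c' - {c'}. lam c' t (restrict x0 t))"
      by (intro sum.cong refl arg_cong[where f="\<lambda>A. sum _ A"]) (auto simp: Tset_def)
    also have "\<dots> = (\<Sum>c'\<in>Cp. gamma Cp S lam c' (restrict x0 c'))"
    proof (intro sum.cong refl)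
      fix c' assume c': "c' \<in> Cp"
      have "\<And>s. s \<in> S c' - {c'} \<Longrightarrow> restrict (restrict x0 c') s = restrict x0 s"
      proof -
        fix s assume "s \<in> S c' - {c'}"
        then have "s \<subseteq> c'" using Sc[OF c'] by blast
        then show "restrict (restrict x0 c') s = restrict x0 s" by (auto simp: restrict_def intro!: ext)
      qed
      then show "(\<Sum>t\<in>S c' - {c'}. lam c' t (restrict x0 t)) = gamma Cp S lam c' (restrict x0 c')"
        using c' by (simp add: gamma_def)
    qed
    also have "\<dots> = (\<Sum>t\<in>?T. gamma Cp S lam t (restrict x0 t))"
      by (rule sum.mono_neutral_left) (use T_fin in \<open>auto simp: Tset_def gamma_def\<close>)
    finally show ?thesis .
  qed
  ultimately show ?thesis
    by (simp add: belief_def sum.distrib sum_subtractf)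
qed

lemma upd: assumes c: "c \<in> Cp"
  shows "dual_obj D C th Cp S (gdd_update D C th Cp S c lam) \<le> dual_obj D C th Cp S lam"
proof -
  define Sc where "Sc = S c - {c}"
  define lam' where "lam' = gdd_update D C th Cp S c lam"
  define A where "A s x = theta_hat C th s x - gamma Cp S lam s x + lam_minus Cp S lam c s x" for s x
  define B where "B x = theta_hat C th c x + lam_in Cp S lam c x" for x
  define G where "G xc = B xc + (\<Sum>s\<in>Sc. A s (restrict xc s))" for xc
  define P where "P = PiE c D"
  define F where "F s xs = Max (G ` {xc \<in> P. restrict xc s = xs})" for s xs
  define m where "m = card Sc"
  let ?T = "Tset Cp S"
  have cV: "c \<subseteq> V" using c CpV by blast
  have finc: "finite c" using cV finV finite_subset by blast
  have Scsub: "\<And>s. s \<in> Sc \<Longrightarrow> s \<subseteq> c \<and> s \<noteq> c" using Sc[OF c] unfolding Sc_def by blast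
  have finSc: "finite Sc" unfolding Sc_def using Sc[OF c] finc
    by (meson finite_Diff finite_Pow_iff finite_subset)
  have Scne: "Sc \<noteq> {}" using Sc[OF c] unfolding Sc_def by blast
  have mpos: "m > 0" unfolding m_def using finSc Scne by (simp add: card_gt_0_iff)
  have cT: "c \<in> ?T" using c by (auto simp: Tset_def)
  have ScT: "Sc \<subseteq> ?T" using c by (auto simp: Tset_def Sc_def)
  have cnSc: "c \<notin> Sc" unfolding Sc_def by blast
  have finP: "finite P" "P \<noteq> {}" unfolding P_def using PiE_fin_ne[OF cV] by auto
  have star: "lam' c s xs = - A s xs + (1 / real m) * F s xs" if "s \<in> Sc" for s xs
    using that unfolding lam'_def gdd_update_def lam_star_def F_def G_def A_def B_def P_def m_def Sc_def
    by (simp add: algebra_simps)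
  have other: "lam' c' s xs = lam c' s xs" if "\<not> (c' = c \<and> s \<in> Sc)" for c' s xs
    using that unfolding lam'_def gdd_update_def Sc_def by auto
  have gsame: "gamma Cp S lam' t x = gamma Cp S lam t x" if "t \<noteq> c" for t x
    using that unfolding gamma_def by (auto simp: other intro!: sum.cong)
  have msame: "lam_minus Cp S lam' c s x = lam_minus Cp S lam c s x" for s x
    unfolding lam_minus_def by (auto simp: other intro!: sum.cong)
  have Asame: "theta_hat C th s x - gamma Cp S lam' s x + lam_minus Cp S lam' c s x = A s x"
    if "s \<in> Sc" for s x
    using that cnSc gsame[of s] msame unfolding A_def by (metis)
  have insame: "lam_in Cp S lam' t x = lam_in Cp S lam t x" if "t \<notin> Sc" for t x
    using that unfolding lam_in_def by (auto simp: other Sc_def intro!: sum.cong)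
  have Bsame: "theta_hat C th c x + lam_in Cp S lam' c x = B x" for x
    using insame[OF cnSc] unfolding B_def by simp
  have bel_s: "belief C th Cp S L s x
      = (theta_hat C th s x - gamma Cp S L s x + lam_minus Cp S L c s x) + L c s x"
    if "s \<in> Sc" for L s x
  proof -
    have e: "{c' \<in> Cp. s \<in> S c' - {c'}} = insert c {c' \<in> Cp. c' \<noteq> c \<and> s \<in> S c' - {c'}}"
      using that c unfolding Sc_def by auto
    have "lam_in Cp S L s x = L c s x + lam_minus Cp S L c s x"
      unfolding lam_in_def lam_minus_def e
      by (subst sum.insert) (use finCp in auto)
    then show ?thesis unfolding belief_def by simp
  qed
  have bel_c: "belief C th Cp S L c x
      = (theta_hat C th c x + lam_in Cp S L c x) - (\<Sum>s\<in>Sc. L c s (restrict x s))" for L x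
    using c unfolding belief_def gamma_def Sc_def by simp
  have bel_o: "belief C th Cp S lam' t x = belief C th Cp S lam t x"
    if "t \<noteq> c" "t \<notin> Sc" for t x
    using that unfolding belief_def by (simp add: insame gsame)
  have split: "dual_obj D C th Cp S L = (\<Sum>t\<in>?T - insert c Sc. maxover D t (belief C th Cp S L t))
     + (maxover D c (belief C th Cp S L c) + (\<Sum>s\<in>Sc. maxover D s (belief C th Cp S L s)))" for L
  proof -
    have "dual_obj D C th Cp S L = (\<Sum>t\<in>?T - insert c Sc. maxover D t (belief C th Cp S L t))
      + (\<Sum>t\<in>insert c Sc. maxover D t (belief C th Cp S L t))"
      unfolding dual_obj_def by (rule sum.subset_diff) (use cT ScT T_fin in auto)
    then show ?thesis using finSc cnSc by simp
  qed
  have rest: "(\<Sum>t\<in>?T - insert c Sc. maxover D t (belief C th Cp S lam' t))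
      = (\<Sum>t\<in>?T - insert c Sc. maxover D t (belief C th Cp S lam t))"
  proof (intro sum.cong refl)
    fix t assume "t \<in> ?T - insert c Sc"
    then have "t \<noteq> c" "t \<notin> Sc" by auto
    then have "belief C th Cp S lam' t = belief C th Cp S lam t" using bel_o by blast
    then show "maxover D t (belief C th Cp S lam' t) = maxover D t (belief C th Cp S lam t)" by simp
  qed
  define M where "M = Max (G ` P)"
  obtain x0 where x0: "x0 \<in> P" "G x0 = M"
    using finP unfolding M_def by (metis (mono_tags, lifting) Max_in finite_imageI image_iff image_is_empty)
  have GleM: "G x \<le> M" if "x \<in> P" for x unfolding M_def using finP that by (intro Max_ge) auto
  have rP: "restrict x s \<in> PiE s D" if "x \<in> P" "s \<in> Sc" for x s
    using that Scsub[OF that(2)] unfolding P_def by (auto simp: PiE_iff)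
  have sV: "s \<subseteq> V" if "s \<in> Sc" for s using Scsub[OF that] cV by blast
  have old: "M \<le> maxover D c (belief C th Cp S lam c) + (\<Sum>s\<in>Sc. maxover D s (belief C th Cp S lam s))"
  proof -
    have "M = belief C th Cp S lam c x0 + (\<Sum>s\<in>Sc. belief C th Cp S lam s (restrict x0 s))"
      unfolding x0(2)[symmetric] G_def bel_c
      by (simp add: bel_s A_def B_def sum.distrib sum_subtractf)
    also have "\<dots> \<le> maxover D c (belief C th Cp S lam c) + (\<Sum>s\<in>Sc. maxover D s (belief C th Cp S lam s))"
    proof (intro add_mono sum_mono maxover_ge)
      show "c \<subseteq> V" by (fact cV)
      show "x0 \<in> PiE c D" using x0(1) unfolding P_def .
      fix s assume "s \<in> Sc"
      then show "s \<subseteq> V" "restrict x0 s \<in> PiE s D" using sV rP[OF x0(1)] by blast+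
    qed
    finally show ?thesis .
  qed
  have Fge: "G x \<le> F s (restrict x s)" if "x \<in> P" for x s
    unfolding F_def using that finP by (intro Max_ge) auto
  have FleM: "F s xs \<le> M" if "s \<in> Sc" "xs \<in> PiE s D" for s xs
  proof -
    obtain y where y: "y \<in> P" using finP by blast
    define xc where "xc = (\<lambda>i. if i \<in> s then xs i else y i)"
    have "xc \<in> P" using y that(2) Scsub[OF that(1)] unfolding xc_def P_def
      by (auto simp: PiE_iff extensional_def)
    moreover have "restrict xc s = xs" using that(2) unfolding xc_def
      by (auto simp: restrict_def PiE_iff extensional_def intro!: ext)
    ultimately have ne: "{xc \<in> P. restrict xc s = xs} \<noteq> {}" by blast
    have "F s xs \<le> Max (G ` P)" unfolding F_def
      by (rule Max_mono) (use ne finP in auto)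
    then show ?thesis unfolding M_def .
  qed
  have new_s: "maxover D s (belief C th Cp S lam' s) \<le> M / real m" if "s \<in> Sc" for s
  proof (rule maxover_le[OF sV[OF that]])
    fix xs assume "xs \<in> PiE s D"
    have "belief C th Cp S lam' s xs = F s xs / real m"
      using bel_s[OF that, of lam' xs] Asame[OF that, of xs] star[OF that, of xs] by simp
    also have "\<dots> \<le> M / real m" using FleM[OF that \<open>xs \<in> PiE s D\<close>] mpos
      by (simp add: divide_right_mono)
    finally show "belief C th Cp S lam' s xs \<le> M / real m" .
  qed
  have new_c: "maxover D c (belief C th Cp S lam' c) \<le> 0"
  proof (rule maxover_le[OF cV])
    fix xc assume xc: "xc \<in> PiE c D"
    have "belief C th Cp S lam' c xc = B xc - (\<Sum>s\<in>Sc. - A s (restrict xc s) + (1 / real m) * F s (restrict xc s))"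
      using bel_c[of lam' xc] Bsame[of xc] star by simp
    also have "\<dots> = G xc - (1 / real m) * (\<Sum>s\<in>Sc. F s (restrict xc s))"
      unfolding G_def by (simp add: sum.distrib sum_distrib_left sum_subtractf)
    also have "\<dots> \<le> G xc - (1 / real m) * (\<Sum>s\<in>Sc. G xc)"
      using Fge xc mpos unfolding P_def
      by (intro diff_left_mono mult_left_mono sum_mono) auto
    also have "\<dots> = 0" using mpos unfolding m_def by simp
    finally show "belief C th Cp S lam' c xc \<le> 0" .
  qed
  have new: "maxover D c (belief C th Cp S lam' c) + (\<Sum>s\<in>Sc. maxover D s (belief C th Cp S lam' s)) \<le> M"
  proof -
    have "(\<Sum>s\<in>Sc. maxover D s (belief C th Cp S lam' s)) \<le> (\<Sum>s\<in>Sc. M / real m)"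
      by (rule sum_mono) (rule new_s)
    also have "\<dots> = M" using mpos unfolding m_def by simp
    finally show ?thesis using new_c by linarith
  qed
  show ?thesis
    using split[of lam'] split[of lam] rest old new unfolding lam'_def by linarith
qed

lemma fold_dec: "set cs \<subseteq> Cp \<Longrightarrow>
  dual_obj D C th Cp S (fold (gdd_update D C th Cp S) cs lam) \<le> dual_obj D C th Cp S lam"
proof (induction cs arbitrary: lam)
  case Nil then show ?case by simp
next
  case (Cons c cs)
  then show ?case using upd[of c lam] by (simp, meson order_trans)
qed

end

theorem proposition3:
  fixes V :: "'v set" and D :: "'v \<Rightarrow> 'a set"
    and C :: "'v set set" and th :: "'v set \<Rightarrow> ('v \<Rightarrow> 'a) \<Rightarrow> real"
    and Cp :: "'v set set" and S :: "'v set \<Rightarrow> 'v set set"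
    and cs :: "'v set list"
  assumes "finite V"
    and "\<And>i. i \<in> V \<Longrightarrow> finite (D i) \<and> D i \<noteq> {}"
    and "C \<subseteq> Pow V"
    and "finite Cp" and "Cp \<subseteq> Pow V"
    and "\<And>c. c \<in> Cp \<Longrightarrow> S c \<subseteq> Pow c \<and> S c - {c} \<noteq> {}"
    and "C \<subseteq> Cp \<union> (\<Union>c\<in>Cp. S c)"
    and "distinct cs" and "set cs = Cp"
  shows "convergent (\<lambda>k. dual_obj D C th Cp S (gdd_iter D C th Cp S cs k))"
proof -
  interpret g: gdd V D C th Cp S
    using assms by unfold_locales auto
  define f where "f k = dual_obj D C th Cp S (gdd_iter D C th Cp S cs k)" for k
  have "decseq f"
  proof (rule decseq_SucI)
    fix k
    show "f (Suc k) \<le> f k"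
      unfolding f_def gdd_iter_def using g.fold_dec assms(9)
      by (simp add: gdd_sweep_def)
  qed
  moreover obtain x0 where x0: "x0 \<in> PiE V D"
    using g.PiE_fin_ne[of V] by blast
  then have "\<forall>k. (\<Sum>t\<in>Tset Cp S. theta_hat C th t (restrict x0 t)) \<le> f k"
    unfolding f_def using g.lower by blast
  ultimately obtain L where "f \<longlonglongrightarrow> L" by (rule decseq_convergent)
  then show ?thesis unfolding f_def convergent_def by blast
qed

end
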